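(* Let $H = \{h_0 = 0_H, h_1, \dots, h_{t-1}\}$ be a finite abelian group with a fixed enumeration of its elements, and let $\boldsymbol{\lambda} = (\lambda_0,\dots,\lambda_{t-1})$ be a sequence of nonnegative integers. Suppose that for infinitely many primes $p$, every non-zero sum subset of type $\boldsymbol{\lambda}$ of $(\mathbb{Z}_p \times H) \setminus \{0_{\mathbb{Z}_p\times H}\}$ is sequenceable. Then every non-zero sum subset of type $\boldsymbol{\lambda}$ of $(\mathbb{Z} \times H) \setminus \{0_{\mathbb{Z}\times H}\}$ is sequenceable.
   Context: For a finite subset $S$ of an abelian group with $|S| = k$, an ordering $(x_1,\dots,x_k)$ of $S$ has partial sums $(y_0,\dots,y_k)$ with $y_0 = 0$, $y_i = x_1+\cdots+x_i$. It is a sequencing if the $y_i$ are pairwise distinct, and a rotational sequencing if they are pairwise distinct except that $y_k = y_0 = 0$; $S$ is sequenceable if it has one or the other. $S$ is non-zero sum if the sum of its elements is nonzero. For an abelian group $G$ and a finite abelian group $H = \{h_0=0_H,\dots,h_{t-1}\}$, the type of a finite subset $S \subseteq G \times H$ is $(\lambda_0,\dots,\lambda_{t-1})$ where $\lambda_i$ is the number of elements of $S$ whose $H$-coordinate equals $h_i$. *)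

theory Defs
  imports "HOL-Computational_Algebra.Primes"
begin

text \<open>An abelian group is given here by its addition and zero; sets are subsets of it.
  Partial sums of an ordering xs: y_i = x_1 + ... + x_i, y_0 = zero.\<close>

definition psum :: "('a \<Rightarrow> 'a \<Rightarrow> 'a) \<Rightarrow> 'a \<Rightarrow> 'a list \<Rightarrow> nat \<Rightarrow> 'a" where
  "psum add z xs i = foldl add z (take i xs)"

definition is_ordering :: "'a set \<Rightarrow> 'a list \<Rightarrow> bool" where
  "is_ordering S xs \<longleftrightarrow> distinct xs \<and> set xs = S"

definition is_sequencing :: "('a \<Rightarrow> 'a \<Rightarrow> 'a) \<Rightarrow> 'a \<Rightarrow> 'a set \<Rightarrow> 'a list \<Rightarrow> bool" where
  "is_sequencing add z S xs \<longleftrightarrow>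
     is_ordering S xs \<and> inj_on (psum add z xs) {0..length xs}"

definition is_rotational_sequencing :: "('a \<Rightarrow> 'a \<Rightarrow> 'a) \<Rightarrow> 'a \<Rightarrow> 'a set \<Rightarrow> 'a list \<Rightarrow> bool" where
  "is_rotational_sequencing add z S xs \<longleftrightarrow>
     is_ordering S xs \<and> psum add z xs (length xs) = z \<and>
     inj_on (psum add z xs) {0..<length xs}"

definition sequenceable :: "('a \<Rightarrow> 'a \<Rightarrow> 'a) \<Rightarrow> 'a \<Rightarrow> 'a set \<Rightarrow> bool" where
  "sequenceable add z S \<longleftrightarrow>
     (\<exists>xs. is_sequencing add z S xs \<or> is_rotational_sequencing add z S xs)"

text \<open>Sum of the elements of a finite set (groups are abelian, so any ordering gives it).\<close>
definition nonzero_sum :: "('a \<Rightarrow> 'a \<Rightarrow> 'a) \<Rightarrow> 'a \<Rightarrow> 'a set \<Rightarrow> bool" where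
  "nonzero_sum add z S \<longleftrightarrow> finite S \<and> (\<forall>xs. is_ordering S xs \<longrightarrow> foldl add z xs \<noteq> z)"

definition of_type :: "(nat \<Rightarrow> 'h) \<Rightarrow> nat \<Rightarrow> (nat \<Rightarrow> nat) \<Rightarrow> ('g \<times> 'h) set \<Rightarrow> bool" where
  "of_type e t lam S \<longleftrightarrow> finite S \<and> (\<forall>i<t. card {x\<in>S. snd x = e i} = lam i)"

text \<open>Z x H, and Z_p x H with Z_p represented by {0..<p} with addition mod p.\<close>
definition addZ :: "int \<times> 'h::ab_group_add \<Rightarrow> int \<times> 'h \<Rightarrow> int \<times> 'h" where
  "addZ x y = (fst x + fst y, snd x + snd y)"

definition addZp :: "nat \<Rightarrow> int \<times> 'h::ab_group_add \<Rightarrow> int \<times> 'h \<Rightarrow> int \<times> 'h" where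
  "addZp p x y = ((fst x + fst y) mod int p, snd x + snd y)"

definition ZpH :: "nat \<Rightarrow> (int \<times> 'h) set" where
  "ZpH p = {0..<int p} \<times> UNIV"

end

theory Submission
  imports Defs
begin

definition redp :: "nat \<Rightarrow> int \<times> 'h \<Rightarrow> int \<times> 'h" where
  "redp p x = (fst x mod int p, snd x)"

lemma foldl_redp:
  "foldl (addZp p) (redp p z) (map (redp p) xs) = redp p (foldl addZ z xs)"
proof (induction xs arbitrary: z)
  case Nil then show ?case by simp
next
  case (Cons x xs)
  have "addZp p (redp p z) (redp p x) = redp p (addZ z x)"
    by (simp add: addZp_def redp_def addZ_def mod_add_eq)
  then show ?case using Cons by simp
qed

lemma redp0: "redp p (0, 0) = (0, 0)" by (simp add: redp_def)

lemma foldl_addZ: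
  "foldl addZ z xs = (fst z + sum_list (map fst xs), snd z + sum_list (map snd xs))"
  by (induction xs arbitrary: z) (auto simp: addZ_def algebra_simps)

lemma mod_small_zero:
  fixes a :: int assumes "\<bar>a\<bar> < int p" "a mod int p = 0" shows "a = 0"
proof -
  have "int p dvd a" using assms(2) by auto
  then obtain k where k: "a = int p * k" by auto
  show ?thesis
  proof (rule ccontr)
    assume "a \<noteq> 0"
    then have "k \<noteq> 0" using k by auto
    then have "\<bar>k\<bar> \<ge> 1" by auto
    then have "\<bar>a\<bar> \<ge> int p" using k by (simp add: abs_mult mult_le_cancel_left1)
    then show False using assms(1) by simp
  qed
qed

theorem proposition4p2:
  fixes e :: "nat \<Rightarrow> 'h::{finite, ab_group_add}" and lam :: "nat \<Rightarrow> nat"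
  assumes "bij_betw e {0..<card (UNIV :: 'h set)} UNIV" and "e 0 = 0"
    and "infinite {p::nat. prime p \<and>
           (\<forall>S. S \<subseteq> ZpH p - {(0, 0)} \<and> of_type e (card (UNIV :: 'h set)) lam S \<and> nonzero_sum (addZp p) (0, 0) S
                \<longrightarrow> sequenceable (addZp p) (0, 0) S)}"
  shows "\<forall>S::(int \<times> 'h) set. S \<subseteq> UNIV - {(0, 0)} \<and> of_type e (card (UNIV :: 'h set)) lam S \<and> nonzero_sum addZ (0, 0) S
           \<longrightarrow> sequenceable addZ (0, 0) S"
proof (intro allI impI)
  fix S :: "(int \<times> 'h) set"
  assume A: "S \<subseteq> UNIV - {(0, 0)} \<and> of_type e (card (UNIV :: 'h set)) lam S \<and> nonzero_sum addZ (0, 0) S"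
  have fin: "finite S" using A by (simp add: nonzero_sum_def)
  define B where "B = (\<Sum>x\<in>S. \<bar>fst x\<bar>)"
  have Bx: "\<bar>fst x\<bar> \<le> B" if "x \<in> S" for x
    unfolding B_def using fin that by (intro member_le_sum) auto
  obtain p where pP: "prime p \<and>
           (\<forall>S. S \<subseteq> ZpH p - {(0, 0)} \<and> of_type e (card (UNIV :: 'h set)) lam S \<and> nonzero_sum (addZp p) (0, 0) S
                \<longrightarrow> sequenceable (addZp p) (0, 0) S)" and pB: "p > nat (2 * B + 1)"
  proof -
    from assms(3) have "\<not> (\<forall>n\<in>{p::nat. prime p \<and>
           (\<forall>S. S \<subseteq> ZpH p - {(0, 0)} \<and> of_type e (card (UNIV :: 'h set)) lam S \<and> nonzero_sum (addZp p) (0, 0) S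
                \<longrightarrow> sequenceable (addZp p) (0, 0) S)}. n < Suc (nat (2 * B + 1)))"
      unfolding finite_nat_set_iff_bounded by blast
    then obtain n where "n \<in> {p::nat. prime p \<and>
           (\<forall>S. S \<subseteq> ZpH p - {(0, 0)} \<and> of_type e (card (UNIV :: 'h set)) lam S \<and> nonzero_sum (addZp p) (0, 0) S
                \<longrightarrow> sequenceable (addZp p) (0, 0) S)}" and "\<not> n < Suc (nat (2 * B + 1))" by blast
    then show ?thesis using that[of n] by simp
  qed
  have B0: "B \<ge> 0" unfolding B_def by (simp add: sum_nonneg)
  have pB': "int p > 2 * B + 1" using pB B0 by (simp add: nat_less_iff)
  let ?f = "redp p :: int \<times> 'h \<Rightarrow> int \<times> 'h"
  have inj: "inj_on ?f S"
  proof (rule inj_onI)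
    fix x y assume xy: "x \<in> S" "y \<in> S" "?f x = ?f y"
    then have m: "fst x mod int p = fst y mod int p" "snd x = snd y"
      by (auto simp: redp_def)
    then have "(fst x - fst y) mod int p = 0"
      by (metis mod_diff_eq diff_self mod_0)
    moreover have "\<bar>fst x - fst y\<bar> < int p" using Bx[OF xy(1)] Bx[OF xy(2)] pB' by linarith
    ultimately have "fst x = fst y" using mod_small_zero by fastforce
    then show "x = y" using \<open>snd x = snd y\<close> by (simp add: prod_eq_iff)
  qed
  have sub: "?f ` S \<subseteq> ZpH p - {(0, 0)}"
  proof
    fix y assume "y \<in> ?f ` S"
    then obtain x where x: "x \<in> S" "y = ?f x" by auto
    have p0: "int p > 0" using pB' B0 by linarith
    have "y \<in> ZpH p" using x p0 by (simp add: redp_def ZpH_def)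
    moreover have "y \<noteq> (0, 0)"
    proof
      assume "y = (0, 0)"
      then have "fst x mod int p = 0" "snd x = 0" using x by (auto simp: redp_def)
      moreover have "\<bar>fst x\<bar> < int p" using Bx[OF x(1)] pB' B0 by linarith
      ultimately have "fst x = 0" using mod_small_zero[of "fst x" p] by simp
      then show False using \<open>snd x = 0\<close> x A by (auto simp: prod_eq_iff)
    qed
    ultimately show "y \<in> ZpH p - {(0, 0)}" by simp
  qed
  have typ_ok: "of_type e (card (UNIV :: 'h set)) lam (?f ` S)"
  proof -
    have "card {x\<in>?f ` S. snd x = c} = card {x\<in>S. snd x = c}" for c
    proof -
      have "{x\<in>?f ` S. snd x = c} = ?f ` {x\<in>S. snd x = c}" by (auto simp: redp_def)
      moreover have "inj_on ?f {x\<in>S. snd x = c}" using inj by (rule inj_on_subset) auto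
      ultimately show ?thesis by (simp add: card_image)
    qed
    then show ?thesis using A fin by (simp add: of_type_def)
  qed
  have ord_pull: "is_ordering S (map (inv_into S ?f) ys) \<and> map ?f (map (inv_into S ?f) ys) = ys"
    if "is_ordering (?f ` S) ys" for ys
  proof -
    have d: "distinct ys" "set ys = ?f ` S" using that by (auto simp: is_ordering_def)
    have m: "map (?f \<circ> inv_into S ?f) ys = ys"
    proof (rule map_idI)
      fix y assume "y \<in> set ys"
      then have "y \<in> ?f ` S" using d(2) by simp
      then show "(?f \<circ> inv_into S ?f) y = y" by (simp add: f_inv_into_f)
    qed
    have "set (map (inv_into S ?f) ys) = S" using d(2) inj by (simp add: inv_into_image_cancel)
    moreover have "distinct (map (inv_into S ?f) ys)"
      using d inj_on_inv_into[of "set ys" ?f S] by (simp add: distinct_map)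
    moreover have "map ?f (map (inv_into S ?f) ys) = ys" using m by (simp only: map_map)
    ultimately show ?thesis by (simp add: is_ordering_def del: map_map)
  qed
  have nz: "nonzero_sum (addZp p) (0, 0) (?f ` S)"
    unfolding nonzero_sum_def
  proof (intro conjI allI impI)
    show "finite (?f ` S)" using fin by simp
  next
    fix ys assume ys: "is_ordering (?f ` S) ys"
    define xs where "xs = map (inv_into S ?f) ys"
    have xs: "is_ordering S xs" "map ?f xs = ys" using ord_pull[OF ys] xs_def by auto
    have ne: "foldl addZ (0, 0) xs \<noteq> (0, 0)" using A xs(1) by (simp add: nonzero_sum_def)
    have eq: "foldl (addZp p) (0, 0) ys = ?f (foldl addZ (0, 0) xs)"
      using foldl_redp[of p "(0,0)" xs] xs(2) by (simp add: redp0)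
    have "sum_list (map fst xs) = (\<Sum>x\<in>S. fst x)"
      using xs(1) by (simp add: is_ordering_def sum_list_distinct_conv_sum_set)
    then have sb: "\<bar>sum_list (map fst xs)\<bar> \<le> B" unfolding B_def by (simp add: sum_abs)
    show "foldl (addZp p) (0, 0) ys \<noteq> (0, 0)"
    proof
      assume "foldl (addZp p) (0, 0) ys = (0, 0)"
      then have "sum_list (map fst xs) mod int p = 0" "sum_list (map snd xs) = 0"
        using eq by (auto simp: redp_def foldl_addZ)
      moreover have "sum_list (map fst xs) = 0"
        using mod_small_zero[of "sum_list (map fst xs)" p] calculation sb pB' B0 by linarith
      ultimately show False using ne by (simp add: foldl_addZ)
    qed
  qed
  have "sequenceable (addZp p) (0, 0) (?f ` S)" using pP sub typ_ok nz by blast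
  then obtain ys where ys: "is_sequencing (addZp p) (0, 0) (?f ` S) ys \<or>
      is_rotational_sequencing (addZp p) (0, 0) (?f ` S) ys" unfolding sequenceable_def by blast
  have yo: "is_ordering (?f ` S) ys" using ys
    by (auto simp: is_sequencing_def is_rotational_sequencing_def)
  define xs where "xs = map (inv_into S ?f) ys"
  have xs: "is_ordering S xs" "map ?f xs = ys" using ord_pull[OF yo] xs_def by auto
  have ps: "psum (addZp p) (0, 0) ys i = ?f (psum addZ (0, 0) xs i)" for i
    using foldl_redp[of p "(0,0)" "take i xs"] xs(2)
    by (auto simp: psum_def redp0 take_map)
  have "\<not> is_rotational_sequencing (addZp p) (0, 0) (?f ` S) ys"
  proof
    assume "is_rotational_sequencing (addZp p) (0, 0) (?f ` S) ys"
    then have "foldl (addZp p) (0, 0) ys = (0, 0)"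
      by (simp add: is_rotational_sequencing_def psum_def)
    then show False using nz yo by (simp add: nonzero_sum_def)
  qed
  then have "inj_on (psum (addZp p) (0, 0) ys) {0..length ys}" using ys
    by (simp add: is_sequencing_def)
  then have "inj_on (?f \<circ> psum addZ (0, 0) xs) {0..length xs}"
  proof -
    have "(?f \<circ> psum addZ (0, 0) xs) = psum (addZp p) (0, 0) ys" by (rule ext) (simp add: ps)
    moreover have "length xs = length ys" using xs(2) by auto
    ultimately show ?thesis using \<open>inj_on (psum (addZp p) (0, 0) ys) {0..length ys}\<close> by simp
  qed
  then have "inj_on (psum addZ (0, 0) xs) {0..length xs}" by (rule inj_on_imageI2)
  then have "is_sequencing addZ (0, 0) S xs" using xs(1) by (simp add: is_sequencing_def)
  then show "sequenceable addZ (0, 0) S" unfolding sequenceable_def by blast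
qed

end
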